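(* Fix any realization of a frame: a finite set $K$ of active devices, slots $\{1,\dots,M\}$, and for each $k\in K$ an intended slot set $I_k\subseteq\{1,\dots,M\}$ and a transmitted slot set $A_k\subseteq I_k$. For each slot $n$ let $A^n=\{k\in K: n\in A_k\}$. Define the genie-aided decoded set $D_{\mathrm g}$ as the result of starting from $D=\emptyset$ and repeatedly adding to $D$ a device $k$ whenever there is a slot $n$ with $A^n\setminus D=\{k\}$, until no such slot exists. Define the IDENTIFY decoded set $D_{\mathrm I}$ as the result of starting from $D=\emptyset$ and repeatedly adding to $D$ a device $k$ whenever there exist a slot $n$ and a subset $T\subseteq S_n(D)$, where $S_n(D)=\{k'\in D: n\in I_{k'}\}$ is the candidate list of slot $n$, such that $T\subseteq A^n$ and $A^n\setminus T=\{k\}$, until no such pair $(n,T)$ yields a new device. Then, with an unlimited number of iterations, $D_{\mathrm I}=D_{\mathrm g}$. Consequently, the IDENTIFY receiver achieves exactly the same packet loss rate as a receiver that knows the positions of the dropped replicas.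
   Context: Setting: irregular repetition slotted ALOHA under a collision channel with energy-harvesting devices. Each active device intends to send identical replicas of its packet in a set $I_k$ of slots of the frame, but some intended replicas may be dropped for lack of energy; $A_k\subseteq I_k$ denotes the slots where replicas were actually transmitted. The receiver knows, upon decoding a device's packet, its intended slot set $I_k$, but not $A_k$. The receiver can classify a slot as idle, singleton (exactly one packet) or collision; subtracting from slot $n$ the packets of a set $T$ of decoded devices yields a singleton slot exactly when all packets in $T$ were actually transmitted in slot $n$ (i.e. $T\subseteq A^n$) and exactly one other packet remains ($|A^n\setminus T|=1$), in which case that remaining packet is decoded. The genie-aided receiver knows the sets $A_k$ and performs standard successive interference cancellation on the transmitted replicas only. The packet loss rate is the probability that a transmitted packet is not decoded by the end of the decoding process. *)

theory Defs
  imports Main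
begin

definition slot_users :: "'a set \<Rightarrow> ('a \<Rightarrow> nat set) \<Rightarrow> nat \<Rightarrow> 'a set" where
  "slot_users K A n = {k \<in> K. n \<in> A k}"

definition cand_list :: "('a \<Rightarrow> nat set) \<Rightarrow> 'a set \<Rightarrow> nat \<Rightarrow> 'a set" where
  "cand_list I D n = {k' \<in> D. n \<in> I k'}"

definition genie_step :: "'a set \<Rightarrow> nat \<Rightarrow> ('a \<Rightarrow> nat set) \<Rightarrow> 'a set \<Rightarrow> 'a set \<Rightarrow> bool" where
  "genie_step K M A D D' \<longleftrightarrow>
     (\<exists>k n. k \<notin> D \<and> n \<in> {1..M} \<and> slot_users K A n - D = {k} \<and> D' = insert k D)"

definition ident_step :: "'a set \<Rightarrow> nat \<Rightarrow> ('a \<Rightarrow> nat set) \<Rightarrow> ('a \<Rightarrow> nat set) \<Rightarrow> 'a set \<Rightarrow> 'a set \<Rightarrow> bool" where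
  "ident_step K M I A D D' \<longleftrightarrow>
     (\<exists>k n T. k \<notin> D \<and> n \<in> {1..M} \<and> T \<subseteq> cand_list I D n \<and>
        T \<subseteq> slot_users K A n \<and> slot_users K A n - T = {k} \<and> D' = insert k D)"

definition process_result :: "('b set \<Rightarrow> 'b set \<Rightarrow> bool) \<Rightarrow> 'b set \<Rightarrow> bool" where
  "process_result step D \<longleftrightarrow> step\<^sup>*\<^sup>* {} D \<and> (\<nexists>D'. step D D')"

abbreviation genie_decoded where
  "genie_decoded K M A D \<equiv> process_result (genie_step K M A) D"

abbreviation ident_decoded where
  "ident_decoded K M I A D \<equiv> process_result (ident_step K M I A) D"

end

theory Submission
  imports Defs
begin

lemma steps_eq:
  assumes "\<And>k. k \<in> K \<Longrightarrow> A k \<subseteq> I k"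
  shows "ident_step K M I A = genie_step K M A"
proof (intro ext iffI)
  fix D D'
  assume "ident_step K M I A D D'"
  then obtain k n T where h: "k \<notin> D" "n \<in> {1..M}" "T \<subseteq> cand_list I D n"
    "T \<subseteq> slot_users K A n" "slot_users K A n - T = {k}" "D' = insert k D"
    unfolding ident_step_def by blast
  have "T \<subseteq> D" using h(3) unfolding cand_list_def by blast
  hence "slot_users K A n - D = {k}" using h by blast
  thus "genie_step K M A D D'" unfolding genie_step_def using h by blast
next
  fix D D'
  assume "genie_step K M A D D'"
  then obtain k n where h: "k \<notin> D" "n \<in> {1..M}" "slot_users K A n - D = {k}" "D' = insert k D"
    unfolding genie_step_def by blast
  let ?T = "slot_users K A n \<inter> D"
  have "?T \<subseteq> cand_list I D n" using assms unfolding cand_list_def slot_users_def by blast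
  moreover have "slot_users K A n - ?T = {k}" using h by blast
  ultimately show "ident_step K M I A D D'" unfolding ident_step_def using h by blast
qed

definition closed_set where
  "closed_set K M A C \<longleftrightarrow> (\<forall>n\<in>{1..M}. \<forall>k. slot_users K A n - C = {k} \<longrightarrow> k \<in> C)"

lemma reach_sub:
  assumes "(genie_step K M A)\<^sup>*\<^sup>* D0 D" "D0 \<subseteq> C" "closed_set K M A C"
  shows "D \<subseteq> C"
  using assms(1,2)
proof (induction rule: rtranclp_induct)
  case base then show ?case by simp
next
  case (step y z)
  then obtain k n where h: "k \<notin> y" "n \<in> {1..M}" "slot_users K A n - y = {k}" "z = insert k y"
    unfolding genie_step_def by blast
  have yC: "y \<subseteq> C" using step by simp
  have "k \<in> C"
  proof (rule ccontr)
    assume "k \<notin> C"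
    hence "slot_users K A n - C = {k}" using h yC by blast
    thus False using assms(3) h(2) \<open>k \<notin> C\<close> unfolding closed_set_def by blast
  qed
  thus ?case using h yC by simp
qed

lemma reach_K:
  assumes "(genie_step K M A)\<^sup>*\<^sup>* D0 D" "D0 \<subseteq> K"
  shows "D \<subseteq> K"
  using assms
proof (induction rule: rtranclp_induct)
  case base then show ?case by simp
next
  case (step y z)
  then show ?case unfolding genie_step_def slot_users_def by blast
qed

lemma term_closed:
  assumes "\<nexists>D'. genie_step K M A D D'"
  shows "closed_set K M A D"
  using assms unfolding closed_set_def genie_step_def by blast

lemma exists_result:
  assumes "finite K"
  shows "\<exists>D. genie_decoded K M A D"
proof -
  have "\<And>D. (genie_step K M A)\<^sup>*\<^sup>* {} D \<Longrightarrow> \<exists>D. genie_decoded K M A D"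
  proof -
    fix D
    show "(genie_step K M A)\<^sup>*\<^sup>* {} D \<Longrightarrow> \<exists>D. genie_decoded K M A D"
    proof (induction "card K - card D" arbitrary: D rule: less_induct)
      case less
      show ?case
      proof (cases "\<exists>D'. genie_step K M A D D'")
        case True
        then obtain D' where s: "genie_step K M A D D'" by blast
        then obtain k where k: "k \<notin> D" "D' = insert k D" "k \<in> K"
          unfolding genie_step_def slot_users_def by blast
        have r: "(genie_step K M A)\<^sup>*\<^sup>* {} D'" using less.prems s by simp
        have DK: "D \<subseteq> K" using reach_K[OF less.prems] by simp
        have fD: "finite D" using DK assms finite_subset by blast
        have "card D' = Suc (card D)" using k fD by simp
        moreover have "card D' \<le> card K" using reach_K[OF r] assms by (simp add: card_mono)
        ultimately have "card K - card D' < card K - card D" by simp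
        thus ?thesis using less.hyps r by blast
      next
        case False
        thus ?thesis using less.prems unfolding process_result_def by blast
      qed
    qed
  qed
  thus ?thesis by blast
qed

lemma unique_result:
  assumes "genie_decoded K M A D1" "genie_decoded K M A D2"
  shows "D1 = D2"
proof -
  have "D1 \<subseteq> D2" using reach_sub[of K M A "{}" D1 D2] term_closed[of K M A D2] assms
    unfolding process_result_def by blast
  moreover have "D2 \<subseteq> D1" using reach_sub[of K M A "{}" D2 D1] term_closed[of K M A D1] assms
    unfolding process_result_def by blast
  ultimately show ?thesis by blast
qed

theorem theorem3:
  fixes K :: "'a set" and M :: nat and I A :: "'a \<Rightarrow> nat set"
  assumes "finite K"
    and "\<And>k. k \<in> K \<Longrightarrow> I k \<subseteq> {1..M}"
    and "\<And>k. k \<in> K \<Longrightarrow> A k \<subseteq> I k"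
  shows "(\<exists>D. genie_decoded K M A D) \<and> (\<exists>D. ident_decoded K M I A D) \<and>
         (\<forall>Dg DI. genie_decoded K M A Dg \<longrightarrow> ident_decoded K M I A DI \<longrightarrow> DI = Dg)"
proof -
  have e: "ident_step K M I A = genie_step K M A" using steps_eq[OF assms(3)] .
  show ?thesis unfolding e using exists_result[OF assms(1), of M A] unique_result[of K M A]
    by blast
qed

end
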